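(* Let $m\ge 1$ and $n\geq 3m+1$ be integers, and let $p,q$ be real numbers with $0<p\leq q$ and $0<p+q<1$. Then the minimum discrepancy of $C_{n,m}$ equals $$\delta(C_{n,m})=\min\{m^2,\ (1+\gamma)m\},$$ where $\gamma=\gamma_{p,q}=\log_{\frac{q}{1-p}}\left(\frac{p}{1-q}\right)$.
   Context: For integers $n\geq 2$, $N=\binom{n}{2}$ and $1\leq m\leq n$, the community code $C_{n,m}\subseteq\mathbb{F}_2^N$ consists of exactly those binary vectors of length $N$ that are the upper-triangular (off-diagonal) part of the adjacency matrix of a simple undirected graph on the labeled vertex set $\{1,\ldots,n\}$ which is a disjoint union of cliques, each clique having at least $m$ vertices. For $\mathbf{x},\mathbf{y}\in\mathbb{F}_2^N$ and $a,b\in\mathbb{F}_2$ let $d_{ab}(\mathbf{y},\mathbf{x})=|\{i: y_i=a,\ x_i=b\}|$. The discrepancy is $\delta(\mathbf{y},\mathbf{x})=\gamma\, d_{10}(\mathbf{y},\mathbf{x})+d_{01}(\mathbf{y},\mathbf{x})$ with $\gamma=\log_{\frac{q}{1-p}}\left(\frac{p}{1-q}\right)$. The minimum discrepancy $\delta(C)$ of a code $C$ is the minimum of $\delta(\mathbf{y},\mathbf{x})$ over all ordered pairs of distinct codewords $\mathbf{x},\mathbf{y}\in C$. *)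

theory Defs
  imports Complex_Main "HOL-Library.Disjoint_Sets"
begin

text \<open>Coordinates of F_2^N, N = n choose 2: unordered pairs {i,j} of vertices in {1..n},
  represented as ordered pairs (i,j) with i < j. A binary vector of length N is represented
  by its support, a subset of these coordinates (x_e = 1 iff e is in the set).\<close>
definition coords :: "nat \<Rightarrow> (nat \<times> nat) set" where
  "coords n = {(i,j). 1 \<le> i \<and> i < j \<and> j \<le> n}"

text \<open>Upper-triangular part of the adjacency matrix of the disjoint union of cliques
  on the blocks of a partition P of {1..n}.\<close>
definition clique_vector :: "nat \<Rightarrow> nat set set \<Rightarrow> (nat \<times> nat) set" where
  "clique_vector n P = {(i,j) \<in> coords n. \<exists>B\<in>P. i \<in> B \<and> j \<in> B}"

definition community_code :: "nat \<Rightarrow> nat \<Rightarrow> (nat \<times> nat) set set" where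
  "community_code n m =
     {clique_vector n P | P. partition_on {1..n} P \<and> (\<forall>B\<in>P. card B \<ge> m)}"

definition d_ab :: "nat \<Rightarrow> bool \<Rightarrow> bool \<Rightarrow> (nat \<times> nat) set \<Rightarrow> (nat \<times> nat) set \<Rightarrow> nat" where
  "d_ab n a b y x = card {e \<in> coords n. (e \<in> y) = a \<and> (e \<in> x) = b}"

definition gamma :: "real \<Rightarrow> real \<Rightarrow> real" where
  "gamma p q = log (q / (1 - p)) (p / (1 - q))"

definition discrepancy :: "nat \<Rightarrow> real \<Rightarrow> (nat \<times> nat) set \<Rightarrow> (nat \<times> nat) set \<Rightarrow> real" where
  "discrepancy n \<gamma> y x = \<gamma> * real (d_ab n True False y x) + real (d_ab n False True y x)"

definition min_discrepancy :: "nat \<Rightarrow> real \<Rightarrow> (nat \<times> nat) set set \<Rightarrow> real" where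
  "min_discrepancy n \<gamma> C = Min {discrepancy n \<gamma> y x | x y. x \<in> C \<and> y \<in> C \<and> x \<noteq> y}"

end

theory Submission
  imports Defs
begin


lemma part_uniq:
  assumes "partition_on V P" "B \<in> P" "B' \<in> P" "x \<in> B" "x \<in> B'"
  shows "B = B'"
  using assms unfolding partition_on_def disjoint_def by blast

lemma part_ex:
  assumes "partition_on V P" "x \<in> V"
  shows "\<exists>B\<in>P. x \<in> B"
  using assms unfolding partition_on_def by blast

definition sameb :: "nat set set \<Rightarrow> nat \<Rightarrow> nat \<Rightarrow> bool" where
  "sameb P i j = (\<exists>B\<in>P. i \<in> B \<and> j \<in> B)"

definition Lset :: "nat \<Rightarrow> nat set set \<Rightarrow> nat set set \<Rightarrow> (nat \<times> nat) set" where
  "Lset n P Q = {(i,j) \<in> coords n. sameb P i j \<and> \<not> sameb Q i j}"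

definition upair :: "nat \<times> nat \<Rightarrow> nat \<times> nat" where
  "upair e = (min (fst e) (snd e), max (fst e) (snd e))"

lemma finite_coords: "finite (coords n)"
proof -
  have "coords n \<subseteq> {1..n} \<times> {1..n}" unfolding coords_def by auto
  then show ?thesis by (rule finite_subset) auto
qed

lemma finite_Lset: "finite (Lset n P Q)"
  unfolding Lset_def by (rule finite_subset[OF _ finite_coords]) auto

lemma sameb_sym: "sameb P i j = sameb P j i"
  unfolding sameb_def by auto

lemma upair_in_Lset:
  assumes "s \<noteq> t" "s \<in> {1..n}" "t \<in> {1..n}" "sameb P s t" "\<not> sameb Q s t"
  shows "upair (s,t) \<in> Lset n P Q"
proof (cases "s < t")
  case True
  then show ?thesis using assms unfolding Lset_def upair_def coords_def by auto
next
  case False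
  then have "t < s" using assms(1) by auto
  then show ?thesis using assms sameb_sym[of P s t] sameb_sym[of Q s t]
    unfolding Lset_def upair_def coords_def by auto
qed

lemma upair_inj:
  assumes "S \<inter> T = {}"
  shows "inj_on upair (S \<times> T)"
proof (rule inj_onI)
  fix a b assume a: "a \<in> S \<times> T" and b: "b \<in> S \<times> T" and e: "upair a = upair b"
  obtain s t where at: "a = (s,t)" "s \<in> S" "t \<in> T" using a by auto
  obtain s' t' where bt: "b = (s',t')" "s' \<in> S" "t' \<in> T" using b by auto
  have "s \<noteq> t" "s' \<noteq> t'" "s \<noteq> t'" "s' \<noteq> t" using assms at bt by auto
  then show "a = b" using e at bt unfolding upair_def
    by (auto simp: min_def max_def split: if_splits)
qed

lemma card_upair:
  assumes "S \<inter> T = {}"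
  shows "card (upair ` (S \<times> T)) = card S * card T"
  using card_image[OF upair_inj[OF assms]] card_cartesian_product by metis

lemma upair_mem: "upair (a,b) = upair (c,d) \<Longrightarrow> a = c \<and> b = d \<or> a = d \<and> b = c"
  unfolding upair_def by (auto simp: min_def max_def split: if_splits)

lemma nat_prod_ge: "(s::nat) \<ge> 1 \<Longrightarrow> t \<ge> 1 \<Longrightarrow> s + t \<le> s * t + 1"
proof -
  assume "s \<ge> 1" "t \<ge> 1"
  then obtain a b where "s = Suc a" "t = Suc b" by (metis Suc_le_D One_nat_def)
  then show ?thesis by simp
qed

lemma pair_in:
  assumes Q: "partition_on {1..n} Q" and "B \<in> P" "w \<in> B" "u \<in> B" "B \<subseteq> {1..n}"
    and "D \<in> Q" "w \<in> D" "u \<notin> D"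
  shows "upair (w,u) \<in> Lset n P Q"
proof (rule upair_in_Lset)
  show "w \<noteq> u" using assms by auto
  show "w \<in> {1..n}" "u \<in> {1..n}" using assms by auto
  show "sameb P w u" using assms unfolding sameb_def by auto
  show "\<not> sameb Q w u"
  proof
    assume "sameb Q w u"
    then obtain D' where "D' \<in> Q" "w \<in> D'" "u \<in> D'" unfolding sameb_def by auto
    then have "D' = D" using part_uniq[OF Q] assms by blast
    then show False using assms \<open>u \<in> D'\<close> by auto
  qed
qed

lemma part_sub: "partition_on V P \<Longrightarrow> B \<in> P \<Longrightarrow> B \<subseteq> V"
  unfolding partition_on_def by auto

lemma part_eq:
  assumes P: "partition_on V P" and Q: "partition_on V Q"
    and h: "\<And>v B C. v \<in> V \<Longrightarrow> B \<in> P \<Longrightarrow> C \<in> Q \<Longrightarrow> v \<in> B \<Longrightarrow> v \<in> C \<Longrightarrow> B = C"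
  shows "P = Q"
proof -
  have *: "P' \<subseteq> Q'" if P': "partition_on V P'" and Q': "partition_on V Q'"
     and h': "\<And>v B C. v \<in> V \<Longrightarrow> B \<in> P' \<Longrightarrow> C \<in> Q' \<Longrightarrow> v \<in> B \<Longrightarrow> v \<in> C \<Longrightarrow> B = C"
     for P' Q'
  proof
    fix B assume B: "B \<in> P'"
    then obtain v where v: "v \<in> B" using P' unfolding partition_on_def by (metis ex_in_conv)
    then have vV: "v \<in> V" using part_sub[OF P' B] by auto
    then obtain C where "C \<in> Q'" "v \<in> C" using part_ex[OF Q'] by blast
    then show "B \<in> Q'" using h'[OF vV B] v by metis
  qed
  have "P \<subseteq> Q" by (rule *[OF P Q h])
  moreover have "Q \<subseteq> P"
  proof (rule *[OF Q P])
    fix v B C assume "v \<in> V" "B \<in> Q" "C \<in> P" "v \<in> B" "v \<in> C"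
    then show "B = C" using h[of v C B] by simp
  qed
  ultimately show ?thesis by (rule subset_antisym)
qed

lemma keyK:
  assumes P: "partition_on {1..n} P" and Q: "partition_on {1..n} Q"
    and bP: "\<forall>B\<in>P. card B \<ge> m" and bQ: "\<forall>C\<in>Q. card C \<ge> m" and m1: "m \<ge> 1"
    and ne: "P \<noteq> Q" and small: "card (Lset n P Q) < m"
  shows "card (Lset n Q P) \<ge> m * m"
proof (cases "Lset n P Q = {}")
  case True
  obtain v B C where v: "v \<in> {1..n}" "B \<in> P" "C \<in> Q" "v \<in> B" "v \<in> C" "B \<noteq> C"
    using part_eq[OF P Q] ne by blast
  have Bs: "B \<subseteq> {1..n}" using part_sub[OF P v(2)] .
  have Cs: "C \<subseteq> {1..n}" using part_sub[OF Q v(3)] .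
  have BC: "B \<subseteq> C"
  proof
    fix b assume "b \<in> B"
    show "b \<in> C"
    proof (rule ccontr)
      assume "b \<notin> C"
      then have "upair (v,b) \<in> Lset n P Q" using pair_in[OF Q v(2) v(4) \<open>b \<in> B\<close> Bs v(3) v(5)] by auto
      then show False using True by auto
    qed
  qed
  then obtain w where w: "w \<in> C" "w \<notin> B" using v(6) by blast
  obtain Bw where Bw: "Bw \<in> P" "w \<in> Bw" using part_ex[OF P] w Cs by blast
  have Bws: "Bw \<subseteq> {1..n}" using part_sub[OF P Bw(1)] .
  have BwC: "Bw \<subseteq> C"
  proof
    fix b assume "b \<in> Bw"
    show "b \<in> C"
    proof (rule ccontr)
      assume "b \<notin> C"
      then have "upair (w,b) \<in> Lset n P Q" using pair_in[OF Q Bw(1) Bw(2) \<open>b \<in> Bw\<close> Bws v(3) w(1)] by auto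
      then show False using True by auto
    qed
  qed
  have disj: "B \<inter> Bw = {}" using part_uniq[OF P v(2) Bw(1)] w Bw by blast
  have "upair ` (B \<times> Bw) \<subseteq> Lset n Q P"
  proof
    fix e assume "e \<in> upair ` (B \<times> Bw)"
    then obtain b c where e: "e = upair (b,c)" "b \<in> B" "c \<in> Bw" by auto
    have "c \<notin> B" using disj e by auto
    show "e \<in> Lset n Q P" unfolding e(1)
      by (rule pair_in[OF P v(3) _ _ Cs v(2)]) (use e BC BwC \<open>c \<notin> B\<close> in auto)
  qed
  then have "card (upair ` (B \<times> Bw)) \<le> card (Lset n Q P)"
    by (rule card_mono[OF finite_Lset])
  then have "card B * card Bw \<le> card (Lset n Q P)" using card_upair[OF disj] by simp
  moreover have "m * m \<le> card B * card Bw" using bP v(2) Bw(1) by (simp add: mult_le_mono)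
  ultimately show ?thesis by linarith
next
  case False
  then obtain i j where ij: "(i,j) \<in> Lset n P Q" by auto
  then obtain B where B: "B \<in> P" "i \<in> B" "j \<in> B" unfolding Lset_def sameb_def by auto
  have Bs: "B \<subseteq> {1..n}" using part_sub[OF P B(1)] .
  have finB: "finite B" using Bs finite_subset by blast
  obtain C where C: "C \<in> Q" "i \<in> C" using part_ex[OF Q] B Bs by blast
  have jC: "j \<notin> C" using ij C B unfolding Lset_def sameb_def by auto
  obtain C' where C': "C' \<in> Q" "j \<in> C'" using part_ex[OF Q] B Bs by blast
  have Cs: "C \<subseteq> {1..n}" using part_sub[OF Q C(1)] .
  have C's: "C' \<subseteq> {1..n}" using part_sub[OF Q C'(1)] .
  define S where "S = B \<inter> C"
  define T where "T = B - C"
  have ST: "S \<inter> T = {}" unfolding S_def T_def by auto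
  have iS: "i \<in> S" and jT: "j \<in> T" using B C jC unfolding S_def T_def by auto
  have cardB: "card S + card T = card B" unfolding S_def T_def
    using card_Int_Diff[OF finB] by simp
  have cS: "card S \<ge> 1" and cT: "card T \<ge> 1"
    using iS jT finB unfolding S_def T_def by (auto intro: Suc_leI card_gt_0_iff[THEN iffD2])
  have sub1: "upair ` (S \<times> T) \<subseteq> Lset n P Q"
  proof
    fix e assume "e \<in> upair ` (S \<times> T)"
    then obtain s t where e: "e = upair (s,t)" "s \<in> S" "t \<in> T" by auto
    show "e \<in> Lset n P Q" unfolding e(1)
      by (rule pair_in[OF Q B(1) _ _ Bs C(1)]) (use e in \<open>auto simp: S_def T_def\<close>)
  qed
  have c1: "card (upair ` (S \<times> T)) = card S * card T" using card_upair[OF ST] .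
  have prod: "card S + card T \<le> card S * card T + 1" using nat_prod_ge[OF cS cT] .
  have big: False if "e \<in> Lset n P Q" "e \<notin> upair ` (S \<times> T)" for e
  proof -
    have "insert e (upair ` (S \<times> T)) \<subseteq> Lset n P Q" using that sub1 by auto
    then have "card (insert e (upair ` (S \<times> T))) \<le> card (Lset n P Q)"
      by (rule card_mono[OF finite_Lset])
    moreover have "card (insert e (upair ` (S \<times> T))) = card S * card T + 1"
      using that(2) c1 finite_subset[OF sub1 finite_Lset] by simp
    ultimately show False using small prod cardB bP B(1) by fastforce
  qed
  have LST: "card S * card T \<le> card (Lset n P Q)"
    using card_mono[OF finite_Lset sub1] c1 by simp
  have TC': "T \<subseteq> C'"
  proof
    fix t assume tT: "t \<in> T"
    show "t \<in> C'"
    proof (rule ccontr)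
      assume "t \<notin> C'"
      then have "upair (j,t) \<in> Lset n P Q"
        using pair_in[OF Q B(1) B(3) _ Bs C'] tT unfolding T_def by auto
      moreover have "upair (j,t) \<notin> upair ` (S \<times> T)"
      proof
        assume "upair (j,t) \<in> upair ` (S \<times> T)"
        then obtain s t' where "s \<in> S" "t' \<in> T" "upair (j,t) = upair (s,t')" by auto
        then show False using upair_mem[of j t s t'] ST jT tT by auto
      qed
      ultimately show False using big by blast
    qed
  qed
  have BC'T: "B \<inter> C' \<subseteq> T"
  proof
    fix x assume x: "x \<in> B \<inter> C'"
    show "x \<in> T"
    proof (rule ccontr)
      assume "x \<notin> T"
      then have "x \<in> C" using x unfolding T_def by auto
      then have "C = C'" using part_uniq[OF Q C(1) C'(1)] x by auto
      then show False using jC C' by auto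
    qed
  qed
  have sS: "card S < m" using LST small cT
    by (metis dual_order.strict_trans2 le_trans mult_le_mono2 nat_mult_1_right)
  have sT: "card T < m" using LST small cS
    by (metis dual_order.strict_trans2 le_trans mult_le_mono1 nat_mult_1)
  obtain w where w: "w \<in> C" "w \<notin> B"
  proof (rule ccontr)
    assume "\<not> thesis"
    then have "C \<subseteq> S" using that unfolding S_def by auto
    then have "card C \<le> card S" using card_mono finB unfolding S_def by (meson finite_Int)
    then show False using sS bQ C(1) by fastforce
  qed
  obtain w' where w': "w' \<in> C'" "w' \<notin> B"
  proof (rule ccontr)
    assume "\<not> thesis"
    then have "C' \<subseteq> T" using that BC'T by auto
    then have "card C' \<le> card T" using card_mono finB unfolding T_def by (meson finite_Diff)
    then show False using sT bQ C'(1) by fastforce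
  qed
  have inside: "Bx \<subseteq> D" if Bx: "Bx \<in> P" "x \<in> Bx" and D: "D \<in> Q" "x \<in> D" and xB: "x \<notin> B" for Bx D x
  proof
    have Bxs: "Bx \<subseteq> {1..n}" using part_sub[OF P Bx(1)] .
    fix u assume "u \<in> Bx"
    show "u \<in> D"
    proof (rule ccontr)
      assume "u \<notin> D"
      then have "upair (x,u) \<in> Lset n P Q"
        using pair_in[OF Q Bx(1) Bx(2) \<open>u \<in> Bx\<close> Bxs D] by auto
      moreover have "upair (x,u) \<notin> upair ` (S \<times> T)"
      proof
        assume "upair (x,u) \<in> upair ` (S \<times> T)"
        then obtain s t' where "s \<in> S" "t' \<in> T" "upair (x,u) = upair (s,t')" by auto
        then show False using upair_mem[of x u s t'] xB unfolding S_def T_def by auto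
      qed
      ultimately show False using big by blast
    qed
  qed
  obtain Bw where Bw: "Bw \<in> P" "w \<in> Bw" using part_ex[OF P] w Cs by blast
  obtain Bw' where Bw': "Bw' \<in> P" "w' \<in> Bw'" using part_ex[OF P] w' C's by blast
  have BwC: "Bw \<subseteq> C" using inside[OF Bw C(1) w(1) w(2)] .
  have BwC': "Bw' \<subseteq> C'" using inside[OF Bw' C'(1) w'(1) w'(2)] .
  have dB: "B \<inter> Bw = {}" using part_uniq[OF P B(1) Bw(1)] w Bw by blast
  have dB': "B \<inter> Bw' = {}" using part_uniq[OF P B(1) Bw'(1)] w' Bw' by blast
  have dS: "S \<inter> Bw = {}" using dB unfolding S_def by auto
  have dT: "T \<inter> Bw' = {}" using dB' unfolding T_def by auto
  have X: "upair ` (S \<times> Bw) \<subseteq> Lset n Q P"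
  proof
    fix e assume "e \<in> upair ` (S \<times> Bw)"
    then obtain b c where e: "e = upair (b,c)" "b \<in> S" "c \<in> Bw" by auto
    have "c \<notin> B" using dB e by auto
    show "e \<in> Lset n Q P" unfolding e(1)
      by (rule pair_in[OF P C(1) _ _ Cs B(1)]) (use e BwC \<open>c \<notin> B\<close> in \<open>auto simp: S_def\<close>)
  qed
  have Y: "upair ` (T \<times> Bw') \<subseteq> Lset n Q P"
  proof
    fix e assume "e \<in> upair ` (T \<times> Bw')"
    then obtain b c where e: "e = upair (b,c)" "b \<in> T" "c \<in> Bw'" by auto
    have "c \<notin> B" using dB' e by auto
    show "e \<in> Lset n Q P" unfolding e(1)
      by (rule pair_in[OF P C'(1) _ _ C's B(1)]) (use e BwC' TC' \<open>c \<notin> B\<close> in \<open>auto simp: T_def\<close>)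
  qed
  have XY: "upair ` (S \<times> Bw) \<inter> upair ` (T \<times> Bw') = {}"
  proof (rule ccontr)
    assume "upair ` (S \<times> Bw) \<inter> upair ` (T \<times> Bw') \<noteq> {}"
    then obtain s c t c' where h: "s \<in> S" "c \<in> Bw" "t \<in> T" "c' \<in> Bw'" "upair (s,c) = upair (t,c')"
      by blast
    then show False using upair_mem[of s c t c'] dB dB' ST unfolding S_def T_def by auto
  qed
  have a0: "card (upair ` (S \<times> Bw) \<union> upair ` (T \<times> Bw')) \<le> card (Lset n Q P)"
    using X Y by (intro card_mono[OF finite_Lset]) auto
  have a4: "card S * card Bw + card T * card Bw' \<le> card (Lset n Q P)"
    using a0 card_Un_disjoint[OF finite_subset[OF X finite_Lset] finite_subset[OF Y finite_Lset] XY]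
      card_upair[OF dS] card_upair[OF dT] by simp
  have a1: "card S * m \<le> card S * card Bw" using bP Bw(1) by simp
  have a2: "card T * m \<le> card T * card Bw'" using bP Bw'(1) by simp
  have a3: "m * m \<le> card S * m + card T * m"
  proof -
    have "m \<le> card B" using bP B(1) by simp
    then have "m * m \<le> card B * m" by (rule mult_le_mono1)
    then show ?thesis using cardB by (metis add_mult_distrib)
  qed
  show ?thesis using a1 a2 a3 a4 by linarith
qed



lemma gamma_ge1:
  fixes p q :: real
  assumes "0 < p" "p \<le> q" "p + q < 1"
  shows "gamma p q \<ge> 1"
proof -
  define a where "a = p / (1 - q)"
  define b where "b = q / (1 - p)"
  have q1: "q < 1" "p < 1" using assms by auto
  have a0: "0 < a" using assms q1 unfolding a_def by auto
  have b1: "b < 1" using assms q1 unfolding b_def by (simp add: divide_less_eq)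
  have b0: "0 < b" using assms q1 unfolding b_def by auto
  have ab: "a \<le> b"
  proof -
    have "p * (1 - p) \<le> q * (1 - q)"
    proof -
      have "q * (1 - q) - p * (1 - p) = (q - p) * (1 - p - q)" by (simp add: algebra_simps)
      moreover have "(q - p) * (1 - p - q) \<ge> 0" using assms by simp
      ultimately show ?thesis by linarith
    qed
    then show ?thesis unfolding a_def b_def using q1
      by (simp add: divide_simps mult.commute)
  qed
  have "ln a \<le> ln b" using ab a0 by simp
  moreover have "ln b < 0" using b0 b1 by simp
  ultimately have "ln a / ln b \<ge> 1" by (simp add: divide_simps)
  then show ?thesis unfolding gamma_def log_def a_def b_def by simp
qed

lemma mem_cv: "e \<in> clique_vector n P \<longleftrightarrow> e \<in> coords n \<and> sameb P (fst e) (snd e)"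
  unfolding clique_vector_def sameb_def by auto

lemma d10_eq: "d_ab n True False (clique_vector n Q) (clique_vector n P) = card (Lset n Q P)"
  unfolding d_ab_def Lset_def by (rule arg_cong[where f=card]) (auto simp: mem_cv)

lemma d01_eq: "d_ab n False True (clique_vector n Q) (clique_vector n P) = card (Lset n P Q)"
  unfolding d_ab_def Lset_def by (rule arg_cong[where f=card]) (auto simp: mem_cv)

lemma disc_eq: "discrepancy n g (clique_vector n Q) (clique_vector n P)
   = g * real (card (Lset n Q P)) + real (card (Lset n P Q))"
  unfolding discrepancy_def d10_eq d01_eq ..

lemma cv_eq_Lset:
  assumes "clique_vector n P = clique_vector n Q"
  shows "Lset n P Q = {}"
proof -
  have False if h: "(a,b) \<in> Lset n P Q" for a b
  proof -
    have "(a,b) \<in> clique_vector n P" "(a,b) \<notin> clique_vector n Q"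
      using h unfolding Lset_def mem_cv by auto
    then show False using assms by simp
  qed
  then show ?thesis by auto
qed

lemma lower:
  assumes P: "partition_on {1..n} P" and Q: "partition_on {1..n} Q"
    and bP: "\<forall>B\<in>P. card B \<ge> m" and bQ: "\<forall>C\<in>Q. card C \<ge> m" and m1: "m \<ge> 1"
    and ne: "P \<noteq> Q" and g1: "g \<ge> 1"
  shows "g * real (card (Lset n Q P)) + real (card (Lset n P Q)) \<ge> min (real (m^2)) ((1 + g) * real m)"
proof -
  define G where "G = card (Lset n Q P)"
  define L where "L = card (Lset n P Q)"
  have mm: "real (m^2) = real m * real m" by (simp add: power2_eq_square)
  have "min (real (m^2)) ((1 + g) * real m) \<le> g * real G + real L"
  proof (cases "L < m")
    case True
    then have "G \<ge> m * m" using keyK[OF P Q bP bQ m1 ne] unfolding L_def G_def by blast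
    then have "real G \<ge> real m * real m" by (metis of_nat_le_iff of_nat_mult)
    moreover have "g * real G \<ge> real G" using g1 mult_right_mono[of 1 g "real G"] by simp
    ultimately show ?thesis using mm by linarith
  next
    case False
    note F = this
    show ?thesis
    proof (cases "G < m")
      case True
      then have "L \<ge> m * m" using keyK[OF Q P bQ bP m1 ne[symmetric]] unfolding L_def G_def by blast
      then have "real L \<ge> real m * real m" by (metis of_nat_le_iff of_nat_mult)
      moreover have "g * real G \<ge> 0" using g1 by simp
      ultimately show ?thesis using mm by linarith
    next
      case False
      then have "real G \<ge> real m" "real L \<ge> real m" using F by auto
      then have "g * real G \<ge> g * real m" using g1 by (simp add: mult_left_mono)
      then have "g * real G + real L \<ge> (1 + g) * real m" using \<open>real L \<ge> real m\<close>
        by (simp add: algebra_simps)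
      then show ?thesis by linarith
    qed
  qed
  then show ?thesis unfolding G_def L_def .
qed



lemma ex1:
  assumes m1: "m \<ge> 1" and n: "n \<ge> 3*m+1"
  shows "\<exists>x y. x \<in> community_code n m \<and> y \<in> community_code n m \<and> x \<noteq> y
           \<and> discrepancy n g y x = real (m^2)"
proof -
  define P where "P = {{1..2*m},{2*m+1..n}}"
  define Q where "Q = {{1..m},{m+1..2*m},{2*m+1..n}}"
  have pP: "partition_on {1..n} P" unfolding P_def partition_on_def disjoint_def
    using m1 n by auto
  have pQ: "partition_on {1..n} Q" unfolding Q_def partition_on_def disjoint_def
    using m1 n by auto
  have cP: "\<forall>B\<in>P. card B \<ge> m" unfolding P_def using n by auto
  have cQ: "\<forall>B\<in>Q. card B \<ge> m" unfolding Q_def using n by auto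
  have L1: "Lset n Q P = {}" unfolding Lset_def sameb_def Q_def P_def by auto
  have L2: "Lset n P Q = {1..m} \<times> {m+1..2*m}" unfolding Lset_def sameb_def Q_def P_def coords_def
    using n by auto
  have xin: "clique_vector n P \<in> community_code n m" unfolding community_code_def using pP cP by blast
  have yin: "clique_vector n Q \<in> community_code n m" unfolding community_code_def using pQ cQ by blast
  have ne: "clique_vector n P \<noteq> clique_vector n Q"
  proof
    assume "clique_vector n P = clique_vector n Q"
    then have "Lset n P Q = {}" by (rule cv_eq_Lset)
    then show False using L2 m1 by auto
  qed
  have "discrepancy n g (clique_vector n Q) (clique_vector n P) = real (m^2)"
    unfolding disc_eq L1 L2 by (simp add: power2_eq_square)
  then show ?thesis using xin yin ne by blast
qed

lemma ex2:
  assumes m1: "m \<ge> 1" and n: "n \<ge> 3*m+1"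
  shows "\<exists>x y. x \<in> community_code n m \<and> y \<in> community_code n m \<and> x \<noteq> y
           \<and> discrepancy n g y x = (1 + g) * real m"
proof -
  define P where "P = {{1..m+1},{m+2..2*m+1},{2*m+2..n}}"
  define Q where "Q = {{1..m},{m+1..2*m+1},{2*m+2..n}}"
  have pP: "partition_on {1..n} P" unfolding P_def partition_on_def disjoint_def
    using m1 n by auto
  have pQ: "partition_on {1..n} Q" unfolding Q_def partition_on_def disjoint_def
    using m1 n by auto
  have cP: "\<forall>B\<in>P. card B \<ge> m" unfolding P_def using n by auto
  have cQ: "\<forall>B\<in>Q. card B \<ge> m" unfolding Q_def using n by auto
  have L1: "Lset n Q P = {m+1} \<times> {m+2..2*m+1}" unfolding Lset_def sameb_def Q_def P_def coords_def
    using n by auto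
  have L2: "Lset n P Q = {1..m} \<times> {m+1}" unfolding Lset_def sameb_def Q_def P_def coords_def
    using n by auto
  have xin: "clique_vector n P \<in> community_code n m" unfolding community_code_def using pP cP by blast
  have yin: "clique_vector n Q \<in> community_code n m" unfolding community_code_def using pQ cQ by blast
  have ne: "clique_vector n P \<noteq> clique_vector n Q"
  proof
    assume "clique_vector n P = clique_vector n Q"
    then have "Lset n P Q = {}" by (rule cv_eq_Lset)
    then show False using L2 m1 by auto
  qed
  have "discrepancy n g (clique_vector n Q) (clique_vector n P) = (1 + g) * real m"
    unfolding disc_eq L1 L2 by (simp add: algebra_simps)
  then show ?thesis using xin yin ne by blast
qed


theorem corollary2:
  fixes n m :: nat and p q :: real
  assumes "m \<ge> 1" and "n \<ge> 3 * m + 1"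
    and "0 < p" and "p \<le> q" and "0 < p + q" and "p + q < 1"
  shows "min_discrepancy n (gamma p q) (community_code n m)
           = min (real (m ^ 2)) ((1 + gamma p q) * real m)"
proof -
  define g where "g = gamma p q"
  have g1: "g \<ge> 1" unfolding g_def using gamma_ge1 assms by simp
  define CC where "CC = community_code n m"
  define Ds where "Ds = {discrepancy n g y x | x y. x \<in> CC \<and> y \<in> CC \<and> x \<noteq> y}"
  have "CC \<subseteq> Pow (coords n)" unfolding CC_def community_code_def clique_vector_def by auto
  then have finCC: "finite CC" by (rule finite_subset) (simp add: finite_coords)
  have "Ds \<subseteq> (\<lambda>(x,y). discrepancy n g y x) ` (CC \<times> CC)" unfolding Ds_def by auto
  then have finD: "finite Ds" by (rule finite_subset) (simp add: finCC)
  have lb: "d \<ge> min (real (m^2)) ((1 + g) * real m)" if dD: "d \<in> Ds" for d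
  proof -
    obtain x y where xy: "d = discrepancy n g y x" "x \<in> CC" "y \<in> CC" "x \<noteq> y"
      using dD unfolding Ds_def by blast
    obtain P where P: "x = clique_vector n P" "partition_on {1..n} P" "\<forall>B\<in>P. card B \<ge> m"
      using xy(2) unfolding CC_def community_code_def by blast
    obtain Q where Q: "y = clique_vector n Q" "partition_on {1..n} Q" "\<forall>B\<in>Q. card B \<ge> m"
      using xy(3) unfolding CC_def community_code_def by blast
    have ne: "P \<noteq> Q" using xy(4) P(1) Q(1) by auto
    have "d = g * real (card (Lset n Q P)) + real (card (Lset n P Q))"
      using xy(1) P(1) Q(1) disc_eq by simp
    then show ?thesis using lower[OF P(2) Q(2) P(3) Q(3) assms(1) ne g1] by simp
  qed
  obtain x1 y1 where h1: "x1 \<in> CC" "y1 \<in> CC" "x1 \<noteq> y1" "discrepancy n g y1 x1 = real (m^2)"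
    using ex1[OF assms(1,2), of g] unfolding CC_def by blast
  have in1: "real (m^2) \<in> Ds" unfolding Ds_def using h1 by (metis (mono_tags, lifting) mem_Collect_eq)
  obtain x2 y2 where h2: "x2 \<in> CC" "y2 \<in> CC" "x2 \<noteq> y2" "discrepancy n g y2 x2 = (1 + g) * real m"
    using ex2[OF assms(1,2), of g] unfolding CC_def by blast
  have in2: "(1 + g) * real m \<in> Ds" unfolding Ds_def using h2 by (metis (mono_tags, lifting) mem_Collect_eq)
  have "Min Ds = min (real (m^2)) ((1 + g) * real m)"
  proof (rule Min_eqI[OF finD])
    show "\<And>y. y \<in> Ds \<Longrightarrow> min (real (m^2)) ((1 + g) * real m) \<le> y" using lb by blast
    show "min (real (m^2)) ((1 + g) * real m) \<in> Ds" using in1 in2 by (simp add: min_def)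
  qed
  then show ?thesis unfolding min_discrepancy_def g_def[symmetric] CC_def[symmetric] Ds_def[symmetric] .
qed

end
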